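(* Let $p>q$ be primes and let $G$ be a transitive permutation group of degree $pq$ containing a transitive subgroup $H$ which is imprimitive with $q$ blocks of size $p$ (i.e. $H$ preserves a partition of the underlying set into $q$ blocks of size $p$). Then $\rho(G)=1$.
   Context: For a permutation group $G$ on a set $V$, two elements $g,h\in G$ are intersecting if $g(v)=h(v)$ for some $v\in V$; a subset $\mathcal{F}\subseteq G$ is intersecting if every pair of its elements is intersecting. The intersection density of $G$ is $\rho(G)=\max\{|\mathcal{F}|:\mathcal{F}\subseteq G \text{ intersecting}\}/\max_{v\in V}|G_v|$, where $G_v$ is the stabilizer of $v$. *)

theory Defs
  imports Complex_Main "HOL-Combinatorics.Permutations" "HOL-Computational_Algebra.Primes"
begin

definition perm_group :: "'a set \<Rightarrow> ('a \<Rightarrow> 'a) set \<Rightarrow> bool" where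
  "perm_group V G \<longleftrightarrow> finite V \<and> (\<forall>g\<in>G. g permutes V) \<and> id \<in> G \<and>
     (\<forall>g\<in>G. \<forall>h\<in>G. g \<circ> h \<in> G) \<and> (\<forall>g\<in>G. inv g \<in> G)"

definition transitive_on :: "'a set \<Rightarrow> ('a \<Rightarrow> 'a) set \<Rightarrow> bool" where
  "transitive_on V G \<longleftrightarrow> (\<forall>u\<in>V. \<forall>v\<in>V. \<exists>g\<in>G. g u = v)"

definition stabilizer :: "('a \<Rightarrow> 'a) set \<Rightarrow> 'a \<Rightarrow> ('a \<Rightarrow> 'a) set" where
  "stabilizer G v = {g\<in>G. g v = v}"

definition intersecting :: "'a set \<Rightarrow> ('a \<Rightarrow> 'a) set \<Rightarrow> bool" where
  "intersecting V F \<longleftrightarrow> (\<forall>g\<in>F. \<forall>h\<in>F. \<exists>v\<in>V. g v = h v)"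

definition intersection_density :: "'a set \<Rightarrow> ('a \<Rightarrow> 'a) set \<Rightarrow> real" where
  "intersection_density V G =
     real (Max {card F | F. F \<subseteq> G \<and> intersecting V F}) /
     real (Max {card (stabilizer G v) | v. v \<in> V})"

definition block_system :: "'a set \<Rightarrow> ('a \<Rightarrow> 'a) set \<Rightarrow> 'a set set \<Rightarrow> nat \<Rightarrow> nat \<Rightarrow> bool" where
  "block_system V H P q p \<longleftrightarrow> \<Union>P = V \<and> (\<forall>B\<in>P. \<forall>C\<in>P. B \<noteq> C \<longrightarrow> B \<inter> C = {}) \<and>
     card P = q \<and> (\<forall>B\<in>P. card B = p) \<and> (\<forall>h\<in>H. \<forall>B\<in>P. h ` B \<in> P)"

end

theory Submission imports Defs "HOL-Algebra.Sylow" "HOL-Algebra.Multiplicative_Group"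
begin


definition PG :: "('a \<Rightarrow> 'a) set \<Rightarrow> ('a \<Rightarrow> 'a) monoid" where
  "PG S = \<lparr>carrier = S, mult = (\<circ>), one = id\<rparr>"

lemma pg_inv:
  assumes "perm_group V S" "g \<in> S" shows "inv_into UNIV g \<circ> g = id" "g \<circ> inv_into UNIV g = id"
proof -
  have "g permutes V" using assms unfolding perm_group_def by auto
  thus "inv_into UNIV g \<circ> g = id" "g \<circ> inv_into UNIV g = id" by (simp_all add: permutes_inv_o)
qed

lemma group_PG: assumes "perm_group V S" shows "group (PG S)"
proof (rule groupI)
  show "\<And>x. x \<in> carrier (PG S) \<Longrightarrow> \<exists>y\<in>carrier (PG S). y \<otimes>\<^bsub>PG S\<^esub> x = \<one>\<^bsub>PG S\<^esub>"
  proof -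
    fix x assume "x \<in> carrier (PG S)"
    hence "x \<in> S" by (simp add: PG_def)
    show "\<exists>y\<in>carrier (PG S). y \<otimes>\<^bsub>PG S\<^esub> x = \<one>\<^bsub>PG S\<^esub>"
    proof (rule bexI[where x="inv_into UNIV x"])
      show "inv_into UNIV x \<in> carrier (PG S)" using \<open>x \<in> S\<close> assms unfolding PG_def perm_group_def by auto
      show "inv_into UNIV x \<otimes>\<^bsub>PG S\<^esub> x = \<one>\<^bsub>PG S\<^esub>" using pg_inv(1)[OF assms \<open>x \<in> S\<close>] by (simp add: PG_def)
    qed
  qed
qed (use assms in \<open>simp_all add: PG_def perm_group_def o_assoc\<close>)

lemma pow_PG: "x [^]\<^bsub>PG S\<^esub> (n::nat) = x ^^ n"
  by (induction n) (auto simp: PG_def nat_pow_def funpow_swap1)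

lemma order_PG: "order (PG S) = card S" by (simp add: order_def PG_def)

lemma pow_card_id: assumes "perm_group V S" "g \<in> S" shows "g ^^ card S = id"
proof -
  interpret group "PG S" by (rule group_PG[OF assms(1)])
  have "g [^]\<^bsub>PG S\<^esub> order (PG S) = \<one>\<^bsub>PG S\<^esub>"
    by (rule pow_order_eq_1) (use assms in \<open>simp add: PG_def\<close>)
  moreover have "g ^^ card S = g [^]\<^bsub>PG S\<^esub> order (PG S)" by (simp only: pow_PG order_PG)
  ultimately show ?thesis by (simp add: PG_def)
qed

lemma subgroup_perm_group:
  assumes "perm_group V H" "subgroup S (PG H)" shows "perm_group V S"
proof -
  interpret group "PG H" by (rule group_PG[OF assms(1)])
  have sub: "S \<subseteq> H" using subgroup.subset[OF assms(2)] by (simp add: PG_def)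
  have mc: "g \<circ> h \<in> S" if "g \<in> S" "h \<in> S" for g h
    using subgroup.m_closed[OF assms(2) that] by (simp add: PG_def)
  have oc: "id \<in> S" using subgroup.one_closed[OF assms(2)] by (simp add: PG_def)
  have ic: "inv_into UNIV g \<in> S" if "g \<in> S" for g
  proof -
    have gH: "g \<in> H" using sub that by auto
    have iH: "inv_into UNIV g \<in> H" using gH assms(1) unfolding perm_group_def by blast
    have "inv\<^bsub>PG H\<^esub> g = inv_into UNIV g"
    proof (rule inv_equality)
      show "inv_into UNIV g \<otimes>\<^bsub>PG H\<^esub> g = \<one>\<^bsub>PG H\<^esub>" using pg_inv(1)[OF assms(1) gH] by (simp add: PG_def)
    qed (use gH iH in \<open>simp_all add: PG_def\<close>)
    with subgroup.m_inv_closed[OF assms(2) that] show ?thesis by simp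
  qed
  have "finite V" "\<forall>g\<in>S. g permutes V" using assms(1) sub unfolding perm_group_def by blast+
  then show ?thesis using mc oc ic unfolding perm_group_def by blast
qed

lemma sylow_sub:
  assumes "perm_group V H" "prime r"
  shows "\<exists>S. perm_group V S \<and> S \<subseteq> H \<and> card S = r ^ multiplicity r (card H)"
proof -
  have fin: "finite H" using assms(1) unfolding perm_group_def
    by (metis finite_permutations finite_subset subsetI permutes_def mem_Collect_eq)
  have ne: "card H \<noteq> 0" using fin assms(1) unfolding perm_group_def by auto
  obtain m where m: "card H = r ^ multiplicity r (card H) * m"
    using multiplicity_dvd by blast
  have "order (PG H) = r ^ multiplicity r (card H) * m" "finite (carrier (PG H))"
    using m fin by (simp_all add: order_PG, simp add: PG_def)
  then obtain S where S: "subgroup S (PG H)" "card S = r ^ multiplicity r (card H)"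
    using sylow_thm[OF assms(2) group_PG[OF assms(1)]] by blast
  moreover have "S \<subseteq> H" using subgroup.subset[OF S(1)] by (simp add: PG_def)
  ultimately show ?thesis using subgroup_perm_group[OF assms(1)] by blast
qed



lemma perm_group_finite: assumes "perm_group V S" shows "finite S"
proof -
  have "S \<subseteq> {g. g permutes V}" using assms unfolding perm_group_def by auto
  moreover have "finite {g. g permutes V}" using assms finite_permutations unfolding perm_group_def by blast
  ultimately show ?thesis by (rule finite_subset)
qed

lemma orbit_stab:
  fixes f :: "('a \<Rightarrow> 'a) \<Rightarrow> 'b \<Rightarrow> 'b"
  assumes pg: "perm_group V S" and hom: "\<And>g h. f (g \<circ> h) = f g \<circ> f h" and fid: "f id = id"
  shows "card S = card ((\<lambda>g. f g u) ` S) * card {g\<in>S. f g u = u}"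
proof -
  have fin: "finite S" by (rule perm_group_finite[OF pg])
  define St where "St = {g\<in>S. f g u = u}"
  define fib where "fib w = {g\<in>S. f g u = w}" for w
  have closed: "g \<circ> h \<in> S" "inv_into UNIV g \<in> S" if "g \<in> S" "h \<in> S" for g h
    using pg that unfolding perm_group_def by blast+
  have fibeq: "fib (f h u) = (\<lambda>s. h \<circ> s) ` St" if hS: "h \<in> S" for h
  proof
    show "(\<lambda>s. h \<circ> s) ` St \<subseteq> fib (f h u)"
      using closed hS by (auto simp: St_def fib_def hom)
    show "fib (f h u) \<subseteq> (\<lambda>s. h \<circ> s) ` St"
    proof
      fix g assume "g \<in> fib (f h u)"
      hence gS: "g \<in> S" and e: "f g u = f h u" by (auto simp: fib_def)
      define s where "s = inv_into UNIV h \<circ> g"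
      have "s \<in> S" using closed hS gS by (simp add: s_def)
      moreover have "f s u = u"
      proof -
        have "f s u = f (inv_into UNIV h) (f h u)" by (simp add: s_def hom e)
        also have "\<dots> = f (inv_into UNIV h \<circ> h) u" by (simp add: hom)
        also have "\<dots> = u" by (simp add: pg_inv(1)[OF pg hS] fid)
        finally show ?thesis .
      qed
      moreover have "h \<circ> s = g"
        by (metis s_def id_comp o_assoc pg_inv(2)[OF pg hS])
      ultimately show "g \<in> (\<lambda>s. h \<circ> s) ` St" unfolding St_def by blast
    qed
  qed
  have cardfib: "card (fib (f h u)) = card St" if hS: "h \<in> S" for h
  proof -
    have "inj_on (\<lambda>s. h \<circ> s) St"
    proof
      fix s1 s2 assume "h \<circ> s1 = h \<circ> s2"
      hence "inv_into UNIV h \<circ> (h \<circ> s1) = inv_into UNIV h \<circ> (h \<circ> s2)" by simp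
      thus "s1 = s2" by (simp add: o_assoc pg_inv(1)[OF pg hS])
    qed
    thus ?thesis by (simp add: fibeq[OF hS] card_image)
  qed
  let ?Orb = "(\<lambda>g. f g u) ` S"
  have "S = (\<Union>w\<in>?Orb. fib w)" by (auto simp: fib_def)
  hence "card S = card (\<Union>w\<in>?Orb. fib w)" by simp
  also have "\<dots> = (\<Sum>w\<in>?Orb. card (fib w))"
    by (rule card_UN_disjoint) (use fin in \<open>auto simp: fib_def\<close>)
  also have "\<dots> = (\<Sum>w\<in>?Orb. card St)"
    by (rule sum.cong) (auto simp: cardfib)
  also have "\<dots> = card ?Orb * card St" by simp
  finally show ?thesis by (simp add: St_def)
qed

lemma cycle_basic:
  fixes \<phi> :: "'b \<Rightarrow> 'b"
  assumes "(\<phi>^^N) w = w" "N > 0"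
  defines "d \<equiv> LEAST k. 0 < k \<and> (\<phi>^^k) w = w"
  shows "0 < d" "\<And>k. (\<phi>^^k) w = w \<longleftrightarrow> d dvd k"
    "inj_on (\<lambda>k. (\<phi>^^k) w) {..<d}"
proof -
  have dl: "0 < d \<and> (\<phi>^^d) w = w" unfolding d_def by (rule LeastI[of _ N]) (use assms in auto)
  thus "0 < d" by simp
  have mult: "(\<phi>^^(d*m)) w = w" for m
    by (induction m) (use dl in \<open>simp_all add: funpow_add\<close>)
  have md: "(\<phi>^^k) w = (\<phi>^^(k mod d)) w" for k
  proof -
    have "(\<phi>^^k) w = (\<phi>^^(k mod d + d * (k div d))) w" by simp
    also have "\<dots> = (\<phi>^^(k mod d)) ((\<phi>^^(d*(k div d))) w)" by (simp only: funpow_add o_apply)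
    finally show ?thesis by (simp add: mult)
  qed
  have nl: "\<not> (0 < k \<and> (\<phi>^^k) w = w)" if "k < d" for k
    using not_less_Least[of k "\<lambda>k. 0 < k \<and> (\<phi>^^k) w = w"] that unfolding d_def by blast
  show "(\<phi>^^k) w = w \<longleftrightarrow> d dvd k" for k
  proof
    assume "(\<phi>^^k) w = w"
    hence "(\<phi>^^(k mod d)) w = w" by (simp add: md[symmetric])
    with nl[of "k mod d"] dl show "d dvd k" by (auto simp: dvd_eq_mod_eq_0)
  next
    assume "d dvd k" thus "(\<phi>^^k) w = w" using mult by auto
  qed
  show "inj_on (\<lambda>k. (\<phi>^^k) w) {..<d}"
  proof (rule inj_onI)
    have aux: "False" if "i < j" "j < d" "(\<phi>^^i) w = (\<phi>^^j) w" for i j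
    proof -
      have "(\<phi>^^(d - j + i)) w = (\<phi>^^(d-j)) ((\<phi>^^i) w)" by (simp add: funpow_add)
      also have "\<dots> = (\<phi>^^(d-j)) ((\<phi>^^j) w)" using that by simp
      also have "\<dots> = (\<phi>^^(d-j+j)) w" by (simp only: funpow_add o_apply)
      also have "\<dots> = (\<phi>^^d) w" using that by simp
      also have "\<dots> = w" using dl by simp
      finally have "(\<phi>^^(d - j + i)) w = w" .
      moreover have "d - j + i < d" "0 < d - j + i" using that by linarith+
      ultimately show False using nl[of "d - j + i"] by blast
    qed
    fix i j assume "i \<in> {..<d}" "j \<in> {..<d}" "(\<phi>^^i) w = (\<phi>^^j) w"
    thus "i = j" using aux[of i j] aux[of j i] by (cases "i < j"; cases "j < i") auto
  qed
qed

lemma cycle_prime: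
  fixes \<phi> :: "'b \<Rightarrow> 'b"
  assumes "(\<phi>^^(r^a)) w = w" "prime r" and Ob: "finite Ob" "\<And>k. (\<phi>^^k) w \<in> Ob"
  shows "card Ob < r \<Longrightarrow> \<phi> w = w"
    and "card Ob = r \<Longrightarrow> \<phi> w \<noteq> w \<Longrightarrow> (\<phi>^^k) w = w \<longleftrightarrow> r dvd k"
proof -
  have N: "r^a > 0" using assms(2) by (simp add: prime_gt_0_nat)
  define d where "d = (LEAST k. 0 < k \<and> (\<phi>^^k) w = w)"
  note cb = cycle_basic[OF assms(1) N, folded d_def]
  have "d dvd r^a" using cb(2)[of "r^a"] assms(1) by simp
  then obtain i where i: "d = r^i" using divides_primepow_nat[OF assms(2)] by blast
  have "card ((\<lambda>k. (\<phi>^^k) w) ` {..<d}) = d" using cb(3) by (simp add: card_image)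
  moreover have "card ((\<lambda>k. (\<phi>^^k) w) ` {..<d}) \<le> card Ob" by (rule card_mono) (use Ob in auto)
  ultimately have dO: "d \<le> card Ob" by simp
  have one: "\<phi> w = w" if "d = 1" using cb(2)[of 1] that by simp
  show "card Ob < r \<Longrightarrow> \<phi> w = w"
  proof -
    assume "card Ob < r"
    hence "r^i < r^1" using dO i by simp
    hence "i = 0" using assms(2) prime_gt_1_nat by (metis power_strict_increasing_iff less_one)
    thus ?thesis using one i by simp
  qed
  assume c: "card Ob = r" and ne: "\<phi> w \<noteq> w"
  have "r^i \<le> r^1" using dO i c by simp
  hence "i \<le> 1" using assms(2) prime_gt_1_nat by (metis power_le_imp_le_exp)
  moreover have "i \<noteq> 0" using one i ne by (metis power_0)
  ultimately have "d = r" using i by (cases i) auto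
  thus "(\<phi>^^k) w = w \<longleftrightarrow> r dvd k" using cb(2) by simp
qed

lemma cycle_fix:
  fixes \<phi> :: "'b \<Rightarrow> 'b"
  assumes "(\<phi>^^(r^a)) w = w" "prime r" and Ob: "finite Ob" "\<And>k. (\<phi>^^k) w \<in> Ob" "card Ob = r"
    and u: "u \<in> Ob" "\<phi> u = u"
  shows "\<phi> w = w"
proof (rule ccontr)
  assume ne: "\<phi> w \<noteq> w"
  note cp = cycle_prime(2)[OF assms(1-4) Ob(3) ne]
  have inj: "inj_on (\<lambda>k. (\<phi>^^k) w) {..<r}"
  proof (rule inj_onI)
    fix i j assume ij: "i \<in> {..<r}" "j \<in> {..<r}" "(\<phi>^^i) w = (\<phi>^^j) w"
    have aux: "False" if "i < j" "j < r" "(\<phi>^^i) w = (\<phi>^^j) w" for i j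
    proof -
      have "(\<phi>^^(r - j + i)) w = (\<phi>^^(r-j)) ((\<phi>^^i) w)" by (simp add: funpow_add)
      also have "\<dots> = (\<phi>^^(r-j)) ((\<phi>^^j) w)" using that by simp
      also have "\<dots> = (\<phi>^^(r-j+j)) w" by (simp only: funpow_add o_apply)
      also have "\<dots> = (\<phi>^^r) w" using that by simp
      also have "\<dots> = w" using cp[of r] by simp
      finally have "r dvd (r - j + i)" using cp by simp
      thus False using that by (auto dest: dvd_imp_le)
    qed
    show "i = j" using aux[of i j] aux[of j i] ij by (cases "i < j"; cases "j < i") auto
  qed
  have sub: "(\<lambda>k. (\<phi>^^k) w) ` {..<r} \<subseteq> Ob" using Ob by auto
  have "card ((\<lambda>k. (\<phi>^^k) w) ` {..<r}) = card Ob" using inj Ob(3) by (simp add: card_image)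
  hence "(\<lambda>k. (\<phi>^^k) w) ` {..<r} = Ob" using card_subset_eq[OF Ob(1) sub] by simp
  with u obtain k where k: "k < r" "u = (\<phi>^^k) w" by blast
  have "(\<phi>^^(Suc k)) w = (\<phi>^^k) w" using k u by simp
  hence e: "(\<phi>^^(r - k)) ((\<phi>^^(Suc k)) w) = (\<phi>^^(r - k)) ((\<phi>^^k) w)" by simp
  have e1: "(\<phi>^^(r - k)) ((\<phi>^^(Suc k)) w) = (\<phi>^^(r - k + Suc k)) w" by (simp only: funpow_add o_apply)
  have e2: "(\<phi>^^(r - k)) ((\<phi>^^k) w) = (\<phi>^^(r - k + k)) w" by (simp only: funpow_add o_apply)
  have "r - k + Suc k = Suc r" "r - k + k = r" using k by auto
  with e e1 e2 have "(\<phi>^^(Suc r)) w = (\<phi>^^r) w" by simp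
  hence "\<phi> ((\<phi>^^r) w) = (\<phi>^^r) w" by simp
  hence "\<phi> w = w" using cp[of r] by simp
  thus False using ne by simp
qed



lemma not_dvd_mult: assumes "prime (r::nat)" "n \<noteq> 0" shows "\<not> r ^ Suc (multiplicity r n) dvd n"
proof -
  have "r > 1" using assms(1) by (rule prime_gt_1_nat)
  hence "\<not> is_unit r" by simp
  thus ?thesis using assms power_dvd_iff_le_multiplicity[of n r "Suc (multiplicity r n)"] by simp
qed

lemma lagrange_pg:
  assumes K: "perm_group V K" and S: "perm_group V S" "S \<subseteq> K"
  shows "card S dvd card K"
proof -
  let ?f = "\<lambda>g. \<lambda>Y. (\<lambda>s. g \<circ> s) ` Y"
  have hom: "?f (g \<circ> h) = ?f g \<circ> ?f h" for g h by (auto simp: fun_eq_iff image_image o_assoc)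
  have fid: "?f id = id" by (auto simp: fun_eq_iff)
  have st: "{g\<in>K. ?f g S = S} = S"
  proof
    show "{g\<in>K. ?f g S = S} \<subseteq> S"
    proof
      fix g assume "g \<in> {g\<in>K. ?f g S = S}"
      hence e: "?f g S = S" by simp
      have "g \<circ> id \<in> ?f g S" using S unfolding perm_group_def by blast
      thus "g \<in> S" using e by simp
    qed
    show "S \<subseteq> {g\<in>K. ?f g S = S}"
    proof
      fix g assume gS: "g \<in> S"
      have "?f g S \<subseteq> S" using S gS unfolding perm_group_def by auto
      moreover have "S \<subseteq> ?f g S"
      proof
        fix s assume sS: "s \<in> S"
        have "s = g \<circ> (inv_into UNIV g \<circ> s)" by (metis id_comp o_assoc pg_inv(2)[OF S(1) gS])
        moreover have "inv_into UNIV g \<circ> s \<in> S" using S gS sS unfolding perm_group_def by blast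
        ultimately show "s \<in> ?f g S" by blast
      qed
      ultimately show "g \<in> {g\<in>K. ?f g S = S}" using gS S(2) by blast
    qed
  qed
  have "card K = card ((\<lambda>g. ?f g S) ` K) * card {g\<in>K. ?f g S = S}"
    by (rule orbit_stab[OF K, of ?f]) (use hom fid in auto)
  thus ?thesis using st by simp
qed

lemma stab_pg:
  assumes K: "perm_group V K" and hom: "\<And>g h. f (g \<circ> h) = f g \<circ> f h" and fid: "f id = id"
  shows "perm_group V {g\<in>K. f g u = u}"
proof -
  have "f (inv_into UNIV g) u = u" if "g \<in> K" "f g u = u" for g
  proof -
    have "f (inv_into UNIV g) u = f (inv_into UNIV g) (f g u)" using that by simp
    also have "\<dots> = f (inv_into UNIV g \<circ> g) u" by (simp add: hom)
    also have "\<dots> = u" by (simp add: pg_inv(1)[OF K that(1)] fid)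
    finally show ?thesis .
  qed
  thus ?thesis using K unfolding perm_group_def by (auto simp: hom fid)
qed

lemma img_pow: "((\<lambda>B. g ` B) ^^ k) B = (g ^^ k) ` B" for g :: "'a \<Rightarrow> 'a"
  by (induction k) (simp_all add: image_comp)

lemma pow_in: assumes "perm_group V S" "g \<in> S" shows "g ^^ k \<in> S"
proof (induction k)
  case 0 thus ?case using assms unfolding perm_group_def by (simp only: funpow.simps)
next
  case (Suc k) thus ?case using assms unfolding perm_group_def by (simp only: funpow.simps)
qed

lemma clique_bound:
  assumes G: "perm_group V G" and I: "finite I" and c: "\<And>i. i \<in> I \<Longrightarrow> c i \<in> G"
    and cl: "\<And>i j v. i \<in> I \<Longrightarrow> j \<in> I \<Longrightarrow> v \<in> V \<Longrightarrow> c i v = c j v \<Longrightarrow> i = j"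
    and F: "F \<subseteq> G" "intersecting V F"
  shows "card F * card I \<le> card G"
proof -
  have finG: "finite G" by (rule perm_group_finite[OF G])
  have finF: "finite F" using F finG finite_subset by blast
  have cl2: "g \<circ> h \<in> G" "inv_into UNIV g \<in> G" if "g \<in> G" "h \<in> G" for g h
    using G that unfolding perm_group_def by blast+
  let ?R1 = "SIGMA i:I. {g\<in>G. g \<circ> c i \<in> F}"
  let ?R2 = "SIGMA g:G. {i\<in>I. g \<circ> c i \<in> F}"
  have f1: "card {g\<in>G. g \<circ> c i \<in> F} = card F" if iI: "i \<in> I" for i
  proof -
    have ci: "c i \<in> G" using c iI by blast
    have "bij_betw (\<lambda>g. g \<circ> c i) {g\<in>G. g \<circ> c i \<in> F} F"
    proof (rule bij_betw_imageI)
      show "inj_on (\<lambda>g. g \<circ> c i) {g\<in>G. g \<circ> c i \<in> F}"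
      proof
        fix g1 g2 assume "g1 \<circ> c i = g2 \<circ> c i"
        hence "g1 \<circ> c i \<circ> inv_into UNIV (c i) = g2 \<circ> c i \<circ> inv_into UNIV (c i)" by simp
        thus "g1 = g2" by (simp add: o_assoc[symmetric] pg_inv(2)[OF G ci])
      qed
      show "(\<lambda>g. g \<circ> c i) ` {g\<in>G. g \<circ> c i \<in> F} = F"
      proof
        show "(\<lambda>g. g \<circ> c i) ` {g\<in>G. g \<circ> c i \<in> F} \<subseteq> F" by auto
        show "F \<subseteq> (\<lambda>g. g \<circ> c i) ` {g\<in>G. g \<circ> c i \<in> F}"
        proof
          fix f assume fF: "f \<in> F"
          have e: "f \<circ> inv_into UNIV (c i) \<circ> c i = f" by (simp add: o_assoc[symmetric] pg_inv(1)[OF G ci])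
          have "f \<circ> inv_into UNIV (c i) \<in> G" using cl2 fF F(1) ci by blast
          thus "f \<in> (\<lambda>g. g \<circ> c i) ` {g\<in>G. g \<circ> c i \<in> F}" using e fF by (metis (mono_tags, lifting) image_eqI mem_Collect_eq)
        qed
      qed
    qed
    thus ?thesis by (rule bij_betw_same_card)
  qed
  have f2: "card {i\<in>I. g \<circ> c i \<in> F} \<le> 1" if gG: "g \<in> G" for g
  proof -
    have "inj g" using G gG unfolding perm_group_def by (auto dest: permutes_inj)
    have "\<forall>a1\<in>{i\<in>I. g \<circ> c i \<in> F}. \<forall>a2\<in>{i\<in>I. g \<circ> c i \<in> F}. a1 = a2"
    proof (intro ballI)
      fix i j assume "i \<in> {i\<in>I. g \<circ> c i \<in> F}" "j \<in> {i\<in>I. g \<circ> c i \<in> F}"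
      hence ij: "i \<in> I" "j \<in> I" "g \<circ> c i \<in> F" "g \<circ> c j \<in> F" by auto
      then obtain v where "v \<in> V" "g (c i v) = g (c j v)" using F(2) unfolding intersecting_def by fastforce
      hence "c i v = c j v" using \<open>inj g\<close> by (auto dest: injD)
      thus "i = j" using cl ij \<open>v \<in> V\<close> by blast
    qed
    thus ?thesis using card_le_Suc0_iff_eq[of "{i\<in>I. g \<circ> c i \<in> F}"] I by auto
  qed
  have "card ?R1 = (\<Sum>i\<in>I. card F)" using I finG by (simp add: f1)
  hence r1: "card ?R1 = card F * card I" by simp
  have "card ?R2 = (\<Sum>g\<in>G. card {i\<in>I. g \<circ> c i \<in> F})" using I finG by simp
  also have "\<dots> \<le> (\<Sum>g\<in>G. 1)" by (rule sum_mono) (use f2 in auto)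
  finally have r2: "card ?R2 \<le> card G" by simp
  have "?R2 = prod.swap ` ?R1" by (auto simp: image_iff)
  hence "card ?R2 = card ?R1" by (simp add: card_image)
  thus ?thesis using r1 r2 by simp
qed



locale pqsetup =
  fixes V :: "'a set" and G H :: "('a \<Rightarrow> 'a) set" and p q :: nat and P :: "'a set set"
  assumes pp: "prime p" and qq: "prime q" and pq: "p > q"
    and pgG: "perm_group V G" and trG: "transitive_on V G" and cV: "card V = p * q"
    and pgH: "perm_group V H" and HG: "H \<subseteq> G" and trH: "transitive_on V H"
    and bs: "block_system V H P q p"
begin

lemma finV: "finite V" using pgH unfolding perm_group_def by blast
lemma p1: "p > 1" using pp by (rule prime_gt_1_nat)
lemma q1: "q > 1" using qq by (rule prime_gt_1_nat)
lemma Vne: "V \<noteq> {}" using cV p1 q1 by auto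
lemma blkV: "B \<in> P \<Longrightarrow> B \<subseteq> V" using bs unfolding block_system_def by blast
lemma cardB: "B \<in> P \<Longrightarrow> card B = p" using bs unfolding block_system_def by blast
lemma finB: "B \<in> P \<Longrightarrow> finite B" using blkV finV finite_subset by blast
lemma Bne: "B \<in> P \<Longrightarrow> B \<noteq> {}" using cardB p1 by fastforce
lemma finP: "finite P"
proof -
  have "P \<subseteq> Pow V" using blkV by blast
  thus ?thesis using finV finite_subset by blast
qed
lemma cardP: "card P = q" using bs unfolding block_system_def by blast
lemma disj: "B \<in> P \<Longrightarrow> C \<in> P \<Longrightarrow> x \<in> B \<Longrightarrow> x \<in> C \<Longrightarrow> B = C"
  using bs unfolding block_system_def by blast
lemma cover: "v \<in> V \<Longrightarrow> \<exists>B\<in>P. v \<in> B" using bs unfolding block_system_def by blast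
lemma pres: "h \<in> H \<Longrightarrow> B \<in> P \<Longrightarrow> h ` B \<in> P" using bs unfolding block_system_def by blast
lemma permH: "h \<in> H \<Longrightarrow> h permutes V" using pgH unfolding perm_group_def by blast
lemma permG: "h \<in> G \<Longrightarrow> h permutes V" using pgG unfolding perm_group_def by blast

lemma stab_card_V:
  assumes pg: "perm_group V K" and tr: "transitive_on V K" and v: "v \<in> V"
  shows "card K = p * q * card {g\<in>K. g v = v}"
proof -
  have "card K = card ((\<lambda>g. g v) ` K) * card {g\<in>K. g v = v}"
    by (rule orbit_stab[OF pg, of "\<lambda>g. g"]) auto
  moreover have "(\<lambda>g. g v) ` K = V"
  proof
    show "(\<lambda>g. g v) ` K \<subseteq> V" using pg v unfolding perm_group_def by (auto dest: permutes_in_image)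
    show "V \<subseteq> (\<lambda>g. g v) ` K" using tr v unfolding transitive_on_def by force
  qed
  ultimately show ?thesis using cV by simp
qed

lemma stab_card_P:
  assumes B: "B \<in> P"
  shows "card H = q * card {g\<in>H. g ` B = B}"
proof -
  have "card H = card ((\<lambda>g. g ` B) ` H) * card {g\<in>H. g ` B = B}"
    by (rule orbit_stab[OF pgH, of "\<lambda>g B. g ` B"]) (auto simp: fun_eq_iff image_comp)
  moreover have "(\<lambda>g. g ` B) ` H = P"
  proof
    show "(\<lambda>g. g ` B) ` H \<subseteq> P" using pres B by auto
    show "P \<subseteq> (\<lambda>g. g ` B) ` H"
    proof
      fix C assume C: "C \<in> P"
      obtain u w where u: "u \<in> B" and w: "w \<in> C" using Bne B C by blast
      obtain h where h: "h \<in> H" "h u = w" using trH blkV B C u w unfolding transitive_on_def by blast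
      have "h ` B = C" using disj[OF pres[OF h(1) B] C, of w] h u w by blast
      thus "C \<in> (\<lambda>g. g ` B) ` H" using h by blast
    qed
  qed
  ultimately show ?thesis using cardP by simp
qed

lemma cardH0: "card H \<noteq> 0"
  using perm_group_finite[OF pgH] pgH unfolding perm_group_def by auto

lemma small_pow: assumes "prime (r::nat)" "n dvd r^a" "n \<le> r" shows "n = 1 \<or> n = r"
proof -
  obtain i where i: "n = r^i" using divides_primepow_nat[OF assms(1)] assms(2) by blast
  have "r > 1" using assms(1) by (rule prime_gt_1_nat)
  hence "i \<le> 1" using assms(3) i by (metis power_one_right power_le_imp_le_exp)
  thus ?thesis using i by (cases i) auto
qed

lemma x_exists: "\<exists>x\<in>H. (\<forall>B\<in>P. x ` B = B) \<and> (\<forall>v\<in>V. \<forall>k. (x^^k) v = v \<longleftrightarrow> p dvd k)"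
proof -
  define a where "a = multiplicity p (card H)"
  obtain SP where pgS: "perm_group V SP" and SH: "SP \<subseteq> H" and cS: "card SP = p ^ a"
    using sylow_sub[OF pgH pp] unfolding a_def by blast
  have idS: "g ^^ (p^a) = id" if "g \<in> SP" for g using pow_card_id[OF pgS that] cS by simp
  have fixB: "g ` B = B" if g: "g \<in> SP" and B: "B \<in> P" for g B
  proof (rule cycle_prime(1)[where \<phi>="\<lambda>B. g ` B" and r=p and a=a and w=B and Ob=P])
    show "((\<lambda>B. g ` B) ^^ (p^a)) B = B" by (simp add: img_pow idS[OF g])
    show "((\<lambda>B. g ` B) ^^ k) B \<in> P" for k
      using pres[OF pow_in[OF pgH, of g k] B] g SH by (auto simp: img_pow)
  qed (use pp finP cardP pq in auto)
  have iterB: "(g^^k) ` B = B" if g: "g \<in> SP" and B: "B \<in> P" for g B k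
  proof (induction k)
    case 0 show ?case by simp
  next
    case (Suc k) show ?case by (simp only: funpow.simps image_comp[symmetric] Suc.IH fixB[OF g B])
  qed
  have stabcard: "card {g\<in>SP. g v = v} * p = p^a" if v: "v \<in> V" for v
  proof -
    obtain B where B: "B \<in> P" "v \<in> B" using cover v by blast
    let ?orb = "(\<lambda>g. g v) ` SP"
    have os: "card SP = card ?orb * card {g\<in>SP. g v = v}"
      by (rule orbit_stab[OF pgS, of "\<lambda>g. g"]) auto
    have sub: "?orb \<subseteq> B"
    proof (rule image_subsetI)
      fix g assume "g \<in> SP" hence "g ` B = B" by (rule fixB[OF _ B(1)])
      thus "g v \<in> B" using B(2) by blast
    qed
    have "card ?orb \<le> p" using card_mono[OF finB[OF B(1)] sub] cardB[OF B(1)] by simp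
    moreover have "card ?orb dvd p^a" using os cS dvd_triv_left[of "card ?orb" "card {g\<in>SP. g v = v}"] by simp
    ultimately have "card ?orb = 1 \<or> card ?orb = p" using small_pow[OF pp] by blast
    moreover have "card ?orb \<noteq> 1"
    proof
      assume c1: "card ?orb = 1"
      have "id \<in> SP" using pgS unfolding perm_group_def by blast
      hence "v \<in> ?orb" by (rule image_eqI[of v _ id, rotated]) simp
      moreover obtain z where "?orb = {z}" using c1 by (rule card_1_singletonE)
      ultimately have "?orb = {v}" by simp
      hence sub2: "SP \<subseteq> {g\<in>H. g v = v}" using SH by auto
      have pgHv: "perm_group V {g\<in>H. g v = v}" by (rule stab_pg[OF pgH, of "\<lambda>g. g"]) auto
      have "p^a dvd card {g\<in>H. g v = v}" using lagrange_pg[OF pgHv pgS sub2] cS by simp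
      then obtain k where k: "card {g\<in>H. g v = v} = p^a * k" by blast
      have "card H = p ^ Suc a * (q * k)" using stab_card_V[OF pgH trH v] k by simp
      hence "p ^ Suc a dvd card H" by (metis dvd_triv_left)
      thus False using not_dvd_mult[OF pp cardH0] unfolding a_def by blast
    qed
    ultimately have "card ?orb = p" by blast
    thus ?thesis using os cS by simp
  qed
  define rep where "rep B = (SOME v. v \<in> B)" for B :: "'a set"
  have rep: "rep B \<in> B" if "B \<in> P" for B using Bne[OF that] unfolding rep_def by (simp add: some_in_eq)
  define Fix where "Fix = {g\<in>SP. \<exists>v\<in>V. g v = v}"
  have Fsub: "Fix \<subseteq> (\<Union>B\<in>P. {g\<in>SP. g (rep B) = rep B})"
  proof
    fix g assume "g \<in> Fix"
    then obtain v where g: "g \<in> SP" and v: "v \<in> V" "g v = v" unfolding Fix_def by blast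
    obtain B where B: "B \<in> P" "v \<in> B" using cover v by blast
    have "g (rep B) = rep B"
    proof (rule cycle_fix[where \<phi>=g and r=p and a=a and w="rep B" and Ob=B and u=v])
      show "(g ^^ (p^a)) (rep B) = rep B" using idS[OF g] by simp
      show "(g ^^ k) (rep B) \<in> B" for k using iterB[OF g B(1), of k] rep[OF B(1)] by blast
    qed (use pp finB B cardB v in auto)
    thus "g \<in> (\<Union>B\<in>P. {g\<in>SP. g (rep B) = rep B})" using g B by blast
  qed
  define s where "s = p^a div p"
  have sv: "card {g\<in>SP. g u = u} = s" if "u \<in> V" for u
  proof -
    have e: "p^a = card {g\<in>SP. g u = u} * p" using stabcard[OF that] by simp
    show ?thesis unfolding s_def e using p1 by simp
  qed
  obtain u0 where u0: "u0 \<in> V" using Vne by blast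
  have sp: "s * p = p^a" using stabcard[OF u0] sv[OF u0] by simp
  have "card Fix \<le> card (\<Union>B\<in>P. {g\<in>SP. g (rep B) = rep B})"
    by (rule card_mono[OF _ Fsub]) (use finP perm_group_finite[OF pgS] in auto)
  also have "\<dots> \<le> (\<Sum>B\<in>P. card {g\<in>SP. g (rep B) = rep B})" by (rule card_UN_le[OF finP])
  also have "\<dots> = (\<Sum>B\<in>P. s)" by (rule sum.cong) (use sv rep blkV in auto)
  also have "\<dots> = q * s" using cardP by simp
  also have "\<dots> < p * s"
  proof -
    have "p^a > 0" using p1 by simp
    hence "s > 0" using sp by (cases s) auto
    thus ?thesis using pq by simp
  qed
  also have "\<dots> = card SP" using sp cS by (simp add: mult.commute)
  finally have "Fix \<noteq> SP" by auto
  moreover have "Fix \<subseteq> SP" unfolding Fix_def by blast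
  ultimately obtain x where x: "x \<in> SP" "x \<notin> Fix" by blast
  have "(x^^k) v = v \<longleftrightarrow> p dvd k" if v: "v \<in> V" for v k
  proof -
    obtain B where B: "B \<in> P" "v \<in> B" using cover v by blast
    show ?thesis
    proof (rule cycle_prime(2)[where \<phi>=x and r=p and a=a and w=v and Ob=B])
      show "(x ^^ (p^a)) v = v" using idS[OF x(1)] by simp
      show "(x ^^ k) v \<in> B" for k using iterB[OF x(1) B(1), of k] B(2) by blast
      show "x v \<noteq> v" using x v unfolding Fix_def by blast
    qed (use pp finB B cardB in auto)
  qed
  thus ?thesis using x fixB SH by blast
qed

lemma y_exists: "\<exists>y\<in>H. \<forall>C\<in>P. \<forall>k. (y^^k) ` C = C \<longleftrightarrow> q dvd k"
proof -
  define b where "b = multiplicity q (card H)"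
  obtain SQ where pgS: "perm_group V SQ" and SH: "SQ \<subseteq> H" and cS: "card SQ = q ^ b"
    using sylow_sub[OF pgH qq] unfolding b_def by blast
  have idS: "g ^^ (q^b) = id" if "g \<in> SQ" for g using pow_card_id[OF pgS that] cS by simp
  have inP: "((\<lambda>B. g ` B) ^^ k) C \<in> P" if "g \<in> SQ" "C \<in> P" for g C k
  proof -
    have "g ^^ k \<in> H" using pow_in[OF pgH] SH that(1) by blast
    thus ?thesis using pres that(2) by (simp only: img_pow)
  qed
  obtain B0 where B0: "B0 \<in> P" using cardP q1 by fastforce
  let ?orb = "(\<lambda>g. g ` B0) ` SQ"
  let ?st = "{g\<in>SQ. g ` B0 = B0}"
  have os: "card SQ = card ?orb * card ?st"
    by (rule orbit_stab[OF pgS, of "\<lambda>g B. g ` B"]) (auto simp: fun_eq_iff image_comp)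
  have sub: "?orb \<subseteq> P"
  proof (rule image_subsetI)
    fix g assume "g \<in> SQ" thus "g ` B0 \<in> P" using pres B0 SH by blast
  qed
  have "card ?orb \<le> q" using card_mono[OF finP sub] cardP by simp
  moreover have "card ?orb dvd q^b" using os cS dvd_triv_left[of "card ?orb" "card ?st"] by simp
  ultimately have "card ?orb = 1 \<or> card ?orb = q" using small_pow[OF qq] by blast
  moreover have "card ?orb \<noteq> 1"
  proof
    assume c1: "card ?orb = 1"
    have "id \<in> SQ" using pgS unfolding perm_group_def by blast
    hence "B0 \<in> ?orb" by (rule image_eqI[of B0 _ id, rotated]) simp
    moreover obtain z where "?orb = {z}" using c1 by (rule card_1_singletonE)
    ultimately have "?orb = {B0}" by simp
    hence sub2: "SQ \<subseteq> {g\<in>H. g ` B0 = B0}"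
    proof (intro subsetI CollectI conjI)
      fix g assume o: "?orb = {B0}" and g: "g \<in> SQ"
      show "g \<in> H" using g SH by blast
      have "g ` B0 \<in> ?orb" using g by (rule imageI)
      thus "g ` B0 = B0" using o by blast
    qed
    have pgHB: "perm_group V {g\<in>H. g ` B0 = B0}"
      by (rule stab_pg[OF pgH, of "\<lambda>g B. g ` B"]) (auto simp: fun_eq_iff image_comp)
    have "q^b dvd card {g\<in>H. g ` B0 = B0}" using lagrange_pg[OF pgHB pgS sub2] cS by simp
    then obtain k where k: "card {g\<in>H. g ` B0 = B0} = q^b * k" by blast
    have "card H = q ^ Suc b * k" using stab_card_P[OF B0] k by simp
    hence "q ^ Suc b dvd card H" by (metis dvd_triv_left)
    thus False using not_dvd_mult[OF qq cardH0] unfolding b_def by blast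
  qed
  ultimately have co: "card ?orb = q" by blast
  define Fix where "Fix = {g\<in>SQ. \<exists>C\<in>P. g ` C = C}"
  have Fsub: "Fix \<subseteq> ?st"
  proof
    fix g assume "g \<in> Fix"
    then obtain C where g: "g \<in> SQ" and C: "C \<in> P" "g ` C = C" unfolding Fix_def by blast
    have "(\<lambda>B. g ` B) B0 = B0"
    proof (rule cycle_fix[where \<phi>="\<lambda>B. g ` B" and r=q and a=b and w=B0 and Ob=P and u=C])
      show "((\<lambda>B. g ` B) ^^ (q^b)) B0 = B0" by (simp add: img_pow idS[OF g])
      show "((\<lambda>B. g ` B) ^^ k) B0 \<in> P" for k using inP[OF g B0] .
    qed (use qq finP cardP C in auto)
    thus "g \<in> ?st" using g by simp
  qed
  have "card ?st > 0"
  proof -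
    have "id \<in> ?st" using pgS unfolding perm_group_def by auto
    thus ?thesis using perm_group_finite[OF pgS] by (auto simp: card_gt_0_iff)
  qed
  hence "card ?st < card SQ" using os co q1 by simp
  moreover have "card Fix \<le> card ?st" by (rule card_mono[OF _ Fsub]) (use perm_group_finite[OF pgS] in auto)
  ultimately have "Fix \<noteq> SQ" by auto
  moreover have "Fix \<subseteq> SQ" unfolding Fix_def by blast
  ultimately obtain y where y: "y \<in> SQ" "y \<notin> Fix" by blast
  have "(y^^k) ` C = C \<longleftrightarrow> q dvd k" if C: "C \<in> P" for C k
  proof -
    have "((\<lambda>B. y ` B) ^^ k) C = C \<longleftrightarrow> q dvd k"
    proof (rule cycle_prime(2)[where \<phi>="\<lambda>B. y ` B" and r=q and a=b and w=C and Ob=P])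
      show "((\<lambda>B. y ` B) ^^ (q^b)) C = C" by (simp add: img_pow idS[OF y(1)])
      show "((\<lambda>B. y ` B) ^^ k) C \<in> P" for k using inP[OF y(1) C] .
      show "y ` C \<noteq> C" using y C unfolding Fix_def by blast
    qed (use qq finP cardP in auto)
    thus ?thesis by (simp add: img_pow)
  qed
  thus ?thesis using y SH by blast
qed

end



context pqsetup begin

lemma bound:
  assumes F: "F \<subseteq> G" "intersecting V F" and v: "v \<in> V"
  shows "card F \<le> card (stabilizer G v)"
proof -
  obtain x where x: "x \<in> H" and xx: "(\<forall>B\<in>P. x ` B = B) \<and> (\<forall>v\<in>V. \<forall>k. (x^^k) v = v \<longleftrightarrow> p dvd k)"
    using x_exists by (rule bexE)
  have xB: "x ` B = B" if "B \<in> P" for B using xx that by simp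
  have xk: "(x^^k) w = w \<longleftrightarrow> p dvd k" if "w \<in> V" for w k using xx that by simp
  obtain y where y: "y \<in> H" and yy: "\<forall>C\<in>P. \<forall>k. (y^^k) ` C = C \<longleftrightarrow> q dvd k"
    using y_exists by (rule bexE)
  have yk: "(y^^k) ` C = C \<longleftrightarrow> q dvd k" if "C \<in> P" for C k using yy that by simp
  have powH: "h ^^ k \<in> H" if "h \<in> H" for h k using pow_in[OF pgH that] .
  have injH: "inj h" if "h \<in> H" for h using permH[OF that] by (rule permutes_inj)
  have xpowB: "(x^^i) ` B = B" if B: "B \<in> P" for i B
  proof (induction i)
    case 0 show ?case by simp
  next
    case (Suc i) show ?case by (simp only: funpow.simps image_comp[symmetric] Suc.IH xB[OF B])
  qed
  have aux_y: "j = l" if "j \<le> l" "l < q" "(y^^j) ` B = (y^^l) ` B" "B \<in> P" for j l B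
  proof -
    have "(y^^l) ` B = (y^^j) ` ((y^^(l-j)) ` B)"
      using that(1) by (simp only: image_comp funpow_add[symmetric] le_add_diff_inverse)
    hence "(y^^j) ` ((y^^(l-j)) ` B) = (y^^j) ` B" using that(3) by simp
    hence "(y^^(l-j)) ` B = B" using injH[OF powH[OF y, of j]] by (simp add: inj_image_eq_iff)
    hence "q dvd (l - j)" using yk[OF that(4)] by blast
    moreover have "l - j < q" using that(1,2) by linarith
    ultimately have "l - j = 0" using dvd_imp_le[of q "l - j"] by (cases "l - j = 0") auto
    thus ?thesis using that(1) by simp
  qed
  have aux_x: "i = k" if "i \<le> k" "k < p" "(x^^i) w = (x^^k) w" "w \<in> V" for i k w
  proof -
    have "x^^k = x^^(i + (k-i))" using that(1) by simp
    also have "\<dots> = x^^i \<circ> x^^(k-i)" by (rule funpow_add)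
    finally have "(x^^k) w = (x^^i) ((x^^(k-i)) w)" by simp
    hence "(x^^i) ((x^^(k-i)) w) = (x^^i) w" using that(3) by simp
    hence "(x^^(k-i)) w = w" using injH[OF powH[OF x, of i]] by (simp add: inj_eq)
    hence "p dvd (k - i)" using xk[OF that(4)] by blast
    moreover have "k - i < p" using that(1,2) by linarith
    ultimately have "k - i = 0" using dvd_imp_le[of p "k - i"] by (cases "k - i = 0") auto
    thus ?thesis using that(1) by simp
  qed
  define c where "c = (\<lambda>(i::nat, j::nat). x^^i \<circ> y^^j)"
  have cG: "c ij \<in> G" for ij
  proof -
    obtain i j where ij: "ij = (i, j)" by (cases ij)
    have "x^^i \<circ> y^^j \<in> H" using powH[OF x] powH[OF y] pgH unfolding perm_group_def by blast
    thus ?thesis using HG ij c_def by auto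
  qed
  have cl: "ij = kl" if "ij \<in> {..<p} \<times> {..<q}" "kl \<in> {..<p} \<times> {..<q}" "w \<in> V" "c ij w = c kl w" for ij kl w
  proof -
    note hyp = that
    obtain i j k l where e: "ij = (i,j)" "kl = (k,l)" by (cases ij, cases kl)
    have b: "i < p" "j < q" "k < p" "l < q" using hyp e by auto
    have eq: "(x^^i) ((y^^j) w) = (x^^k) ((y^^l) w)" using hyp(4) e by (simp add: c_def)
    obtain B where B: "B \<in> P" "w \<in> B" using cover hyp(3) by blast
    have C1: "(y^^j) ` B \<in> P" "(y^^l) ` B \<in> P" using pres[OF powH[OF y] B(1)] by auto
    have "(x^^i) ((y^^j) w) \<in> (x^^i) ` ((y^^j) ` B)" using B(2) by blast
    hence m1: "(x^^i) ((y^^j) w) \<in> (y^^j) ` B" using xpowB[OF C1(1)] by simp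
    have "(x^^k) ((y^^l) w) \<in> (x^^k) ` ((y^^l) ` B)" using B(2) by blast
    hence m2: "(x^^i) ((y^^j) w) \<in> (y^^l) ` B" using xpowB[OF C1(2)] eq by simp
    have "(y^^j) ` B = (y^^l) ` B" using disj[OF C1 m1 m2] .
    hence jl: "j = l" using aux_y[of j l B] aux_y[of l j B] b B(1) by (cases "j \<le> l") auto
    have wV: "(y^^j) w \<in> V" using permH[OF powH[OF y]] hyp(3) by (simp add: permutes_in_image)
    have "(x^^i) ((y^^j) w) = (x^^k) ((y^^j) w)" using eq jl by simp
    hence "i = k" using aux_x[of i k "(y^^j) w"] aux_x[of k i "(y^^j) w"] b wV by (cases "i \<le> k") auto
    thus ?thesis using jl e by simp
  qed
  have "card F * card ({..<p} \<times> {..<q}) \<le> card G"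
    by (rule clique_bound[OF pgG _ cG cl F]) auto
  hence "card F * (p * q) \<le> p * q * card (stabilizer G v)"
    using stab_card_V[OF pgG trG v] by (simp add: card_cartesian_product stabilizer_def)
  thus ?thesis using p1 q1 by (simp add: mult.commute)
qed

end

theorem proposition2p1:
  fixes V :: "'a set" and G H :: "('a \<Rightarrow> 'a) set" and p q :: nat
  assumes "prime p" and "prime q" and "p > q"
    and "perm_group V G" and "transitive_on V G" and "card V = p * q"
    and "perm_group V H" and "H \<subseteq> G" and "transitive_on V H"
    and "\<exists>P. block_system V H P q p"
  shows "intersection_density V G = 1"
proof -
  obtain P where P: "block_system V H P q p" using assms(10) by blast
  interpret pqsetup V G H p q P using assms P by unfold_locales
  obtain v0 where v0: "v0 \<in> V" using Vne by blast
  have finG: "finite G" by (rule perm_group_finite[OF pgG])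
  have st: "card (stabilizer G v) = card (stabilizer G v0)" if "v \<in> V" for v
  proof -
    have "p * q * card (stabilizer G v) = p * q * card (stabilizer G v0)"
      using stab_card_V[OF pgG trG that] stab_card_V[OF pgG trG v0] unfolding stabilizer_def by linarith
    thus ?thesis using p1 q1 by simp
  qed
  have M1: "Max {card F | F. F \<subseteq> G \<and> intersecting V F} = card (stabilizer G v0)"
  proof (rule Max_eqI)
    have "{card F | F. F \<subseteq> G \<and> intersecting V F} \<subseteq> {..card G}"
    proof
      fix y assume "y \<in> {card F | F. F \<subseteq> G \<and> intersecting V F}"
      then obtain F where "y = card F" "F \<subseteq> G" by blast
      thus "y \<in> {..card G}" using card_mono[OF finG] by simp
    qed
    thus "finite {card F | F. F \<subseteq> G \<and> intersecting V F}" by (rule finite_subset) simp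
    show "y \<le> card (stabilizer G v0)" if "y \<in> {card F | F. F \<subseteq> G \<and> intersecting V F}" for y
    proof -
      note hy = that
      obtain F where "y = card F" "F \<subseteq> G" "intersecting V F" using hy by blast
      thus ?thesis using bound[OF _ _ v0] by simp
    qed
    have "stabilizer G v0 \<subseteq> G" unfolding stabilizer_def by blast
    moreover have "intersecting V (stabilizer G v0)" unfolding intersecting_def
    proof (intro ballI)
      fix g h assume "g \<in> stabilizer G v0" "h \<in> stabilizer G v0"
      hence "g v0 = h v0" unfolding stabilizer_def by simp
      thus "\<exists>v\<in>V. g v = h v" using v0 by blast
    qed
    ultimately show "card (stabilizer G v0) \<in> {card F | F. F \<subseteq> G \<and> intersecting V F}" by blast
  qed
  have M2: "Max {card (stabilizer G v) | v. v \<in> V} = card (stabilizer G v0)"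
  proof (rule Max_eqI)
    have "{card (stabilizer G v) | v. v \<in> V} = {card (stabilizer G v0)}"
    proof
      show "{card (stabilizer G v) | v. v \<in> V} \<subseteq> {card (stabilizer G v0)}" using st by blast
      show "{card (stabilizer G v0)} \<subseteq> {card (stabilizer G v) | v. v \<in> V}" using v0 by blast
    qed
    thus "finite {card (stabilizer G v) | v. v \<in> V}" by simp
    show "y \<le> card (stabilizer G v0)" if "y \<in> {card (stabilizer G v) | v. v \<in> V}" for y
      using that st by fastforce
    show "card (stabilizer G v0) \<in> {card (stabilizer G v) | v. v \<in> V}" using v0 by blast
  qed
  have "id \<in> stabilizer G v0" using pgG unfolding perm_group_def stabilizer_def by auto
  moreover have "finite (stabilizer G v0)" using finG unfolding stabilizer_def by simp
  ultimately have "card (stabilizer G v0) > 0" by (auto simp: card_gt_0_iff)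
  thus ?thesis unfolding intersection_density_def M1 M2 by simp
qed

end
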